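(* Let $X\in\{\mathsf{T}\mathsf{S},\ \mathsf{T}\mathsf{S}\mathsf{T}\}$ and $Y\in\{\mathsf{S}\mathsf{T},\ \mathsf{S}\mathsf{T}\mathsf{S},\ \mathsf{S}\mathsf{T}\mathsf{S}\mathsf{T}\}$. Then $X\not\sqsubseteq Y$ and $Y\not\sqsubseteq X$.
   Context: Fix attribute–taxonomy pairs $A_1{:}T_1,\dots,A_d{:}T_d$ with distinct attribute names, where each taxonomy $T_i=(V_i,\le_{V_i})$ is a poset. A t-tuple over a t-schema $S\subseteq\{A_1{:}T_1,\dots,A_d{:}T_d\}$ maps each $A_i$ in $S$ to a value of $V_i$; $\mathcal{D}$ is the set of all t-tuples over all such t-schemas. A preference relation is a binary relation $\succeq$ on $\mathcal{D}$. Preferences are given by a formula $F(x,y)=\bigvee_i P_i(x,y)$, a disjunction of statements; each statement $P_i$ is a disjunction of clauses, each clause a satisfiable conjunction of atoms of the forms $x[A_i]\le_{V_i} v$, $x[A_i]\not\le_{V_i} v$, $y[A_i]\le_{V_i} v$, $y[A_i]\not\le_{V_i} v$; the formula induces $t_1\succeq t_2\iff F(t_1,t_2)$. Operator $\mathsf{T}$ maps a formula to one inducing the transitive closure over $\mathcal{D}$ of the induced relation. Operator $\mathsf{S}$ (specificity-based refinement): repeat rounds; in a round, for each statement $P_i$ let $\mathrm{Impl}(P_i)$ be the set of statements $P_j$ such that $P_j(t_2,t_1)\Rightarrow P_i(t_1,t_2)$ for all $t_1,t_2\in\mathcal{D}$ but not conversely; simultaneously replace every $P_i$ with nonempty $\mathrm{Impl}(P_i)$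 by $P_i(x,y)\wedge\bigwedge_{P_j\in \mathrm{Impl}(P_i)}\neg P_j(y,x)$; stop when no $\mathrm{Impl}$ set is nonempty. After each operator, contradictory clauses and subsumed statements are removed. For $X\in\{\mathsf{T},\mathsf{S}\}^*$, $\succeq_X$ is the relation induced by applying the operators of $X$ in order to the initial formula. Containment $X\sqsubseteq Y$ means $\succeq_X\subseteq\succeq_Y$ for every initial preference formula (over any taxonomies). *)

theory Defs
  imports Main
begin

text \<open>Attributes are A_0,...,A_(d-1), identified with their indices.  Each taxonomy
  T_i = (V i, le i) is a poset whose values are encoded as natural numbers.
  A t-tuple is a partial map from attribute indices to values; its schema is its domain.\<close>

type_synonym ttuple = "nat \<Rightarrow> nat option"

definition wf_taxonomies :: "nat \<Rightarrow> (nat \<Rightarrow> nat set) \<Rightarrow> (nat \<Rightarrow> nat rel) \<Rightarrow> bool" where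
  "wf_taxonomies d V le \<longleftrightarrow> (\<forall>i<d. partial_order_on (V i) (le i))"

definition tdom :: "nat \<Rightarrow> (nat \<Rightarrow> nat set) \<Rightarrow> ttuple set" where
  "tdom d V = {t. dom t \<subseteq> {..<d} \<and> (\<forall>i a. t i = Some a \<longrightarrow> a \<in> V i)}"

datatype var = VX | VY

text \<open>Le v i a : v[A_i] <= a ;  NLe v i a : v[A_i] not<= a\<close>
datatype atom = Le var nat nat | NLe var nat nat

type_synonym clause = "atom list"
type_synonym statement = "clause list"
type_synonym formula = "statement list"

definition val_le :: "(nat \<Rightarrow> nat rel) \<Rightarrow> ttuple \<Rightarrow> nat \<Rightarrow> nat \<Rightarrow> bool" where
  "val_le le t i a \<longleftrightarrow> (\<exists>b. t i = Some b \<and> (b, a) \<in> le i)"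

fun pick :: "var \<Rightarrow> ttuple \<Rightarrow> ttuple \<Rightarrow> ttuple" where
  "pick VX t1 t2 = t1"
| "pick VY t1 t2 = t2"

fun atom_holds :: "(nat \<Rightarrow> nat rel) \<Rightarrow> atom \<Rightarrow> ttuple \<Rightarrow> ttuple \<Rightarrow> bool" where
  "atom_holds le (Le v i a) t1 t2 = val_le le (pick v t1 t2) i a"
| "atom_holds le (NLe v i a) t1 t2 = (\<not> val_le le (pick v t1 t2) i a)"

fun atom_wf :: "nat \<Rightarrow> (nat \<Rightarrow> nat set) \<Rightarrow> atom \<Rightarrow> bool" where
  "atom_wf d V (Le v i a) = (i < d \<and> a \<in> V i)"
| "atom_wf d V (NLe v i a) = (i < d \<and> a \<in> V i)"

definition clause_holds :: "(nat \<Rightarrow> nat rel) \<Rightarrow> clause \<Rightarrow> ttuple \<Rightarrow> ttuple \<Rightarrow> bool" where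
  "clause_holds le c t1 t2 \<longleftrightarrow> (\<forall>at\<in>set c. atom_holds le at t1 t2)"

definition clause_wf :: "nat \<Rightarrow> (nat \<Rightarrow> nat set) \<Rightarrow> (nat \<Rightarrow> nat rel) \<Rightarrow> clause \<Rightarrow> bool" where
  "clause_wf d V le c \<longleftrightarrow> (\<forall>at\<in>set c. atom_wf d V at)
     \<and> (\<exists>t1\<in>tdom d V. \<exists>t2\<in>tdom d V. clause_holds le c t1 t2)"

definition formula_wf :: "nat \<Rightarrow> (nat \<Rightarrow> nat set) \<Rightarrow> (nat \<Rightarrow> nat rel) \<Rightarrow> formula \<Rightarrow> bool" where
  "formula_wf d V le F \<longleftrightarrow> (\<forall>P\<in>set F. \<forall>c\<in>set P. clause_wf d V le c)"

definition stmt_rel :: "nat \<Rightarrow> (nat \<Rightarrow> nat set) \<Rightarrow> (nat \<Rightarrow> nat rel) \<Rightarrow> statement \<Rightarrow> ttuple rel" where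
  "stmt_rel d V le P = {(t1, t2). t1 \<in> tdom d V \<and> t2 \<in> tdom d V \<and> (\<exists>c\<in>set P. clause_holds le c t1 t2)}"

text \<open>All operators (Impl, subsumption) are defined semantically over D, so a statement
  is represented by the relation on D it induces and a formula by the set of its statements.\<close>

definition sem :: "nat \<Rightarrow> (nat \<Rightarrow> nat set) \<Rightarrow> (nat \<Rightarrow> nat rel) \<Rightarrow> formula \<Rightarrow> ttuple rel set" where
  "sem d V le F = stmt_rel d V le ` set F"

definition induced :: "'a rel set \<Rightarrow> 'a rel" where
  "induced G = \<Union> G"

text \<open>Removal of subsumed statements (contradictory clauses do not affect the semantics).\<close>
definition cleanup :: "'a rel set \<Rightarrow> 'a rel set" where
  "cleanup G = {P \<in> G. \<not> (\<exists>Q\<in>G. P \<subset> Q)}"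

text \<open>Operator T: its statements are the compositions of chains of statements
  P_i1(x,z1) /\ P_i2(z1,z2) /\ ... /\ P_ik(z_(k-1),y) (intermediate tuples in D);
  their disjunction induces the transitive closure.\<close>
inductive_set chains :: "'a rel set \<Rightarrow> 'a rel set" for G where
  base: "P \<in> G \<Longrightarrow> P \<in> chains G"
| step: "P \<in> G \<Longrightarrow> Q \<in> chains G \<Longrightarrow> P O Q \<in> chains G"

definition opT :: "'a rel set \<Rightarrow> 'a rel set" where
  "opT G = cleanup (chains G)"

definition Impl :: "'a rel set \<Rightarrow> 'a rel \<Rightarrow> 'a rel set" where
  "Impl G P = {Q \<in> G. converse Q \<subseteq> P \<and> \<not> P \<subseteq> converse Q}"

definition sround :: "'a rel set \<Rightarrow> 'a rel set" where
  "sround G = (\<lambda>P. if Impl G P = {} then P else P - \<Union> (converse ` Impl G P)) ` G"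

definition sstable :: "'a rel set \<Rightarrow> bool" where
  "sstable G \<longleftrightarrow> (\<forall>P\<in>G. Impl G P = {})"

definition opS :: "'a rel set \<Rightarrow> 'a rel set" where
  "opS G = cleanup ((sround ^^ (LEAST n. sstable ((sround ^^ n) G))) G)"

datatype oper = T | S

fun apply_op :: "oper \<Rightarrow> 'a rel set \<Rightarrow> 'a rel set" where
  "apply_op T G = opT G"
| "apply_op S G = opS G"

text \<open>Apply the operators of the word X in order (leftmost first).\<close>
definition apply_word :: "oper list \<Rightarrow> 'a rel set \<Rightarrow> 'a rel set" where
  "apply_word X G = fold apply_op X G"

definition pref_rel :: "oper list \<Rightarrow> nat \<Rightarrow> (nat \<Rightarrow> nat set) \<Rightarrow> (nat \<Rightarrow> nat rel) \<Rightarrow> formula \<Rightarrow> ttuple rel" where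
  "pref_rel X d V le F = induced (apply_word X (sem d V le F))"

definition contained :: "oper list \<Rightarrow> oper list \<Rightarrow> bool" where
  "contained X Y \<longleftrightarrow> (\<forall>d V le F. wf_taxonomies d V le \<longrightarrow> formula_wf d V le F \<longrightarrow>
      pref_rel X d V le F \<subseteq> pref_rel Y d V le F)"

end

theory Submission
  imports Defs
begin


definition pt :: "nat \<Rightarrow> ttuple" where "pt k = (\<lambda>n. if n = 0 then Some k else None)"
definition R :: "nat \<Rightarrow> nat set \<Rightarrow> ttuple rel" where "R k A = (\<lambda>j. (pt k, pt j)) ` A"

lemma pt_inj[simp]: "pt a = pt b \<longleftrightarrow> a = b"
  unfolding pt_def by (metis option.inject)

lemma mem_R[simp]: "(pt a, pt b) \<in> R x A \<longleftrightarrow> a = x \<and> b \<in> A"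
  unfolding R_def by auto

lemma R_comp[simp]: "R x A O R y B = (if y \<in> A then R x B else {})"
  unfolding R_def by auto

lemma R_empty[simp]: "R x {} = {}" "R x A = {} \<longleftrightarrow> A = {}" "{} = R x A \<longleftrightarrow> A = {}"
  unfolding R_def by auto

lemma R_sub[simp]: "R x A \<subseteq> R y B \<longleftrightarrow> A = {} \<or> (x = y \<and> A \<subseteq> B)"
  unfolding R_def by auto

lemma R_eq[simp]: "R x A = R y B \<longleftrightarrow> (A = {} \<and> B = {}) \<or> (x = y \<and> A \<subseteq> B \<and> B \<subseteq> A)"
proof -
  have "R x A = R y B \<longleftrightarrow> R x A \<subseteq> R y B \<and> R y B \<subseteq> R x A" by blast
  then show ?thesis by (simp only: R_sub) auto
qed

lemma convR_sub[simp]: "(R y B)\<inverse> \<subseteq> R x A \<longleftrightarrow> B = {} \<or> (B \<subseteq> {x} \<and> y \<in> A)"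
proof -
  have "(R y B)\<inverse> \<subseteq> R x A \<longleftrightarrow> (\<forall>j\<in>B. (pt j, pt y) \<in> R x A)" unfolding R_def by auto
  then show ?thesis by (simp only: mem_R) blast
qed

lemma R_sub_conv[simp]: "R x A \<subseteq> (R y B)\<inverse> \<longleftrightarrow> A = {} \<or> (A \<subseteq> {y} \<and> x \<in> B)"
proof -
  have "R x A \<subseteq> (R y B)\<inverse> \<longleftrightarrow> (\<forall>j\<in>A. (pt j, pt x) \<in> R y B)" unfolding R_def by auto
  then show ?thesis by (simp only: mem_R) blast
qed

lemma R_eq_conv[simp]: "R x A = (R y B)\<inverse> \<longleftrightarrow> (A = {} \<and> B = {}) \<or> (A \<subseteq> {y} \<and> y \<in> A \<and> B \<subseteq> {x} \<and> x \<in> B)"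
  "(R y B)\<inverse> = R x A \<longleftrightarrow> (A = {} \<and> B = {}) \<or> (A \<subseteq> {y} \<and> y \<in> A \<and> B \<subseteq> {x} \<and> x \<in> B)"
proof -
  have "R x A = (R y B)\<inverse> \<longleftrightarrow> R x A \<subseteq> (R y B)\<inverse> \<and> (R y B)\<inverse> \<subseteq> R x A" by blast
  then show "R x A = (R y B)\<inverse> \<longleftrightarrow> (A = {} \<and> B = {}) \<or> (A \<subseteq> {y} \<and> y \<in> A \<and> B \<subseteq> {x} \<and> x \<in> B)"
    by (simp only: convR_sub R_sub_conv) auto
  then show "(R y B)\<inverse> = R x A \<longleftrightarrow> (A = {} \<and> B = {}) \<or> (A \<subseteq> {y} \<and> y \<in> A \<and> B \<subseteq> {x} \<and> x \<in> B)"
    by (metis)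
qed

lemma R_minus_conv[simp]: "R x A - (R y B)\<inverse> = (if x \<in> B then R x (A - {y}) else R x A)"
  unfolding R_def by auto

lemma Impl_insert[simp]: "Impl (insert Q G) P = (if Q\<inverse> \<subseteq> P \<and> \<not> P \<subseteq> Q\<inverse> then insert Q (Impl G P) else Impl G P)"
  "Impl {} P = {}"
  unfolding Impl_def by auto

lemma sstable_iff: "sstable G \<longleftrightarrow> (\<forall>P\<in>G. \<forall>Q\<in>G. \<not> (Q\<inverse> \<subseteq> P \<and> \<not> P \<subseteq> Q\<inverse>))"
  unfolding sstable_def Impl_def by auto

lemma sstable_mono: "H \<subseteq> C \<Longrightarrow> \<forall>P\<in>C. \<forall>Q\<in>C. \<not> (Q\<inverse> \<subseteq> P \<and> \<not> P \<subseteq> Q\<inverse>) \<Longrightarrow> sstable H"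
  unfolding sstable_iff by blast

lemma opS_0: "sstable G \<Longrightarrow> opS G = cleanup G"
  unfolding opS_def by (subst Least_eq_0) auto

lemma opS_1: "\<not> sstable G \<Longrightarrow> sstable (sround G) \<Longrightarrow> opS G = cleanup (sround G)"
  unfolding opS_def
proof -
  assume a: "\<not> sstable G" "sstable (sround G)"
  have "(LEAST n. sstable ((sround ^^ n) G)) = 1"
    by (rule Least_equality) (use a in \<open>auto simp: not_less_eq_eq[symmetric]\<close>, metis One_nat_def Suc_leI funpow_0 gr0I)
  then show "cleanup ((sround ^^ (LEAST n. sstable ((sround ^^ n) G))) G) = cleanup (sround G)" by simp
qed

lemma diff_Un2: "A - (B \<union> C) = (A - B) - C" by blast

lemma cleanup_sub: "cleanup X \<subseteq> X" unfolding cleanup_def by auto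

lemma Union_cleanup: "finite X \<Longrightarrow> \<Union>(cleanup X) = \<Union>X"
proof
  assume f: "finite X"
  show "\<Union>X \<subseteq> \<Union>(cleanup X)"
  proof
    fix p assume "p \<in> \<Union>X"
    then obtain P where P: "P \<in> X" "p \<in> P" by auto
    from finite_has_maximal2[OF f P(1)] obtain M where "M \<in> X" "P \<subseteq> M" "\<forall>b\<in>X. M \<subseteq> b \<longrightarrow> M = b" by blast
    then have "M \<in> cleanup X" unfolding cleanup_def by auto
    with P \<open>P \<subseteq> M\<close> show "p \<in> \<Union>(cleanup X)" by auto
  qed
qed (use cleanup_sub in blast)

lemma Union_sround: "\<Union>(sround G) \<subseteq> \<Union>G"
  unfolding sround_def by auto

lemma Union_iter: "\<Union>((sround ^^ n) G) \<subseteq> \<Union>G"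
proof (induction n)
  case (Suc n) then show ?case using Union_sround[of "(sround ^^ n) G"] by auto
qed simp

lemma Union_opS: "\<Union>(opS G) \<subseteq> \<Union>G"
  unfolding opS_def using cleanup_sub Union_iter by blast

lemma Union_chains: "\<Union>(chains G) \<subseteq> (\<Union>G)\<^sup>+"
proof
  fix p assume "p \<in> \<Union>(chains G)"
  then obtain P where "P \<in> chains G" "p \<in> P" by auto
  then show "p \<in> (\<Union>G)\<^sup>+"
  proof (induction P arbitrary: p rule: chains.induct)
    case (base P) then show ?case by (meson UnionI r_into_trancl')
  next
    case (step P Q)
    then obtain x y z where "p = (x,z)" "(x,y) \<in> P" "(y,z) \<in> Q" by auto
    with step show ?case by (meson UnionI r_into_trancl' trancl_trans)
  qed
qed

lemma Union_opT: "\<Union>(opT G) \<subseteq> (\<Union>G)\<^sup>+"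
  unfolding opT_def using cleanup_sub Union_chains by blast

lemma Union_opT_ge: "finite (chains G) \<Longrightarrow> \<Union>G \<subseteq> \<Union>(opT G)"
  unfolding opT_def by (simp add: Union_cleanup) (use chains.base in blast)

lemma chains_sub: "G \<subseteq> C \<Longrightarrow> (\<forall>P\<in>G. \<forall>Q\<in>C. P O Q \<in> C) \<Longrightarrow> chains G \<subseteq> C"
proof
  fix P assume a: "G \<subseteq> C" "\<forall>P\<in>G. \<forall>Q\<in>C. P O Q \<in> C" and p: "P \<in> chains G"
  from p show "P \<in> C" by (induction P rule: chains.induct) (use a in auto)
qed

definition RR :: "nat list \<Rightarrow> nat set list \<Rightarrow> ttuple rel set" where
  "RR Xs Ts = insert {} (set (concat (map (\<lambda>x. map (R x) Ts) Xs)))"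

lemma chains_RR: "G \<subseteq> RR Xs Ts \<Longrightarrow> chains G \<subseteq> RR Xs Ts"
proof (rule chains_sub)
  assume G: "G \<subseteq> RR Xs Ts"
  have "P O Q \<in> RR Xs Ts" if "P \<in> RR Xs Ts" "Q \<in> RR Xs Ts" for P Q
  proof -
    have e: "{} \<in> RR Xs Ts" unfolding RR_def by simp
    have r: "a \<in> set Xs \<Longrightarrow> B \<in> set Ts \<Longrightarrow> R a B \<in> RR Xs Ts" for a B unfolding RR_def by force
    show ?thesis
    proof (cases "P = {} \<or> Q = {}")
      case True then show ?thesis using e by auto
    next
      case False
      have "\<exists>a\<in>set Xs. \<exists>A\<in>set Ts. P = R a A" "\<exists>a\<in>set Xs. \<exists>A\<in>set Ts. Q = R a A"
        using that False unfolding RR_def by auto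
      then obtain a A b B where "P = R a A" "Q = R b B" "a \<in> set Xs" "B \<in> set Ts"
        by blast
      then show ?thesis using e r by simp
    qed
  qed
  then show "\<forall>P\<in>G. \<forall>Q\<in>RR Xs Ts. P O Q \<in> RR Xs Ts" using G by blast
qed

lemma finite_RR: "finite (RR Xs Ts)"
  unfolding RR_def by auto

lemma cleanup_eq2: "L \<subseteq> X \<Longrightarrow> X \<subseteq> C \<Longrightarrow> K \<subseteq> L \<Longrightarrow> (\<forall>P\<in>K. \<forall>Q\<in>C. \<not> P \<subset> Q)
   \<Longrightarrow> C \<subseteq> K \<union> E \<Longrightarrow> (\<forall>P\<in>E. \<exists>Q\<in>L. P \<subset> Q) \<Longrightarrow> cleanup X = K"
proof -
  assume a: "L \<subseteq> X" "X \<subseteq> C" "K \<subseteq> L" "\<forall>P\<in>K. \<forall>Q\<in>C. \<not> P \<subset> Q" "C \<subseteq> K \<union> E"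
    "\<forall>P\<in>E. \<exists>Q\<in>L. P \<subset> Q"
  show ?thesis
  proof (intro set_eqI iffI)
    fix P assume P: "P \<in> cleanup X"
    then have "P \<in> X" "\<not> (\<exists>Q\<in>X. P \<subset> Q)" unfolding cleanup_def by auto
    show "P \<in> K"
    proof (rule ccontr)
      assume "P \<notin> K"
      with \<open>P \<in> X\<close> a(2,5) have "P \<in> E" by blast
      with a(6) obtain Q where "Q \<in> L" "P \<subset> Q" by blast
      with a(1) \<open>\<not> (\<exists>Q\<in>X. P \<subset> Q)\<close> show False by blast
    qed
  next
    fix P assume P: "P \<in> K"
    then have "P \<in> X" using a by blast
    moreover have "\<not> (\<exists>Q\<in>X. P \<subset> Q)"
    proof
      assume "\<exists>Q\<in>X. P \<subset> Q"
      then obtain Q where "Q \<in> X" "P \<subset> Q" by blast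
      then have "Q \<in> C" using a(2) by blast
      with a(4) P \<open>P \<subset> Q\<close> show False by blast
    qed
    ultimately show "P \<in> cleanup X" unfolding cleanup_def by blast
  qed
qed


definition V5 :: "nat \<Rightarrow> nat set" where "V5 = (\<lambda>_. {..<5})"
definition le5 :: "nat \<Rightarrow> nat rel" where "le5 = (\<lambda>_. Id_on {..<5})"
definition cl :: "nat \<Rightarrow> nat \<Rightarrow> clause" where "cl x y = [Le VX 0 x, Le VY 0 y]"
definition stm :: "nat \<Rightarrow> nat list \<Rightarrow> statement" where "stm x ys = map (cl x) ys"

lemma wf5: "wf_taxonomies 1 V5 le5"
  unfolding wf_taxonomies_def V5_def le5_def partial_order_on_def preorder_on_def
  by (simp add: refl_on_Id_on Id_on_subset_Times)

lemma pt_tdom: "x < 5 \<Longrightarrow> pt x \<in> tdom 1 V5"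
  unfolding tdom_def pt_def V5_def by (auto split: if_splits)

lemma tdom_pt: "t \<in> tdom 1 V5 \<Longrightarrow> t 0 = Some x \<Longrightarrow> t = pt x"
  unfolding tdom_def pt_def by (auto simp: fun_eq_iff dom_def)

lemma val_le5: "x < 5 \<Longrightarrow> val_le le5 t 0 x \<longleftrightarrow> t 0 = Some x"
  unfolding val_le_def le5_def by (auto simp: Id_on_iff)

lemma clause_holds5: "x < 5 \<Longrightarrow> y < 5 \<Longrightarrow> clause_holds le5 (cl x y) t1 t2 \<longleftrightarrow> t1 0 = Some x \<and> t2 0 = Some y"
  unfolding clause_holds_def cl_def by (simp add: val_le5)

lemma stmt_rel_stm: "x < 5 \<Longrightarrow> \<forall>y\<in>set ys. y < 5 \<Longrightarrow> stmt_rel 1 V5 le5 (stm x ys) = R x (set ys)"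
proof -
  assume x: "x < 5" and ys: "\<forall>y\<in>set ys. y < 5"
  show ?thesis
  proof (intro set_eqI iffI)
    fix p assume "p \<in> stmt_rel 1 V5 le5 (stm x ys)"
    then obtain t1 t2 y where p: "p = (t1,t2)" "t1 \<in> tdom 1 V5" "t2 \<in> tdom 1 V5" "y \<in> set ys"
      "clause_holds le5 (cl x y) t1 t2"
      unfolding stmt_rel_def stm_def by auto
    then have "t1 0 = Some x" "t2 0 = Some y" using clause_holds5 x ys by auto
    then have "t1 = pt x" "t2 = pt y" using tdom_pt p by auto
    then show "p \<in> R x (set ys)" using p unfolding R_def by auto
  next
    fix p assume "p \<in> R x (set ys)"
    then obtain y where p: "p = (pt x, pt y)" "y \<in> set ys" unfolding R_def by auto
    have "clause_holds le5 (cl x y) (pt x) (pt y)" using clause_holds5 x ys p by (simp add: pt_def)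
    then show "p \<in> stmt_rel 1 V5 le5 (stm x ys)"
      unfolding stmt_rel_def stm_def using p pt_tdom x ys by auto
  qed
qed

lemma wf_stm: "x < 5 \<Longrightarrow> \<forall>y\<in>set ys. y < 5 \<Longrightarrow> \<forall>c\<in>set (stm x ys). clause_wf 1 V5 le5 c"
proof
  fix c assume x: "x < 5" and ys: "\<forall>y\<in>set ys. y < 5" and c: "c \<in> set (stm x ys)"
  then obtain y where y: "y \<in> set ys" "c = cl x y" unfolding stm_def by auto
  have a: "\<forall>at\<in>set c. atom_wf 1 V5 at" using x ys y by (auto simp: cl_def V5_def)
  have "clause_holds le5 c (pt x) (pt y)" using clause_holds5[of x y] x ys y by (simp add: pt_def)
  then show "clause_wf 1 V5 le5 c" unfolding clause_wf_def using a pt_tdom x ys y by blast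
qed

lemma ch_eq: "P \<in> G \<Longrightarrow> Q \<in> chains G \<Longrightarrow> P O Q = Z \<Longrightarrow> Z \<in> chains G"
  using chains.step by blast

definition "F1 = [stm 0 [1,2], stm 1 [0], stm 1 [3], stm 3 [0,4]]"
definition "G1 = {R 0 {1,2}, R 1 {0}, R 1 {3}, R 3 {0,4}}"

lemma sem1: "sem 1 V5 le5 F1 = G1"
  unfolding sem_def F1_def G1_def by (simp add: stmt_rel_stm[simplified])

lemma wf1: "formula_wf 1 V5 le5 F1"
  unfolding formula_wf_def F1_def by (simp; intro conjI wf_stm[simplified]; simp)

lemma closed_reach: "(\<And>x y. (x,y) \<in> r \<Longrightarrow> x \<in> Z \<Longrightarrow> y \<in> Z) \<Longrightarrow> a \<in> Z \<Longrightarrow> (a,b) \<in> r\<^sup>+ \<Longrightarrow> b \<in> Z"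
proof -
  assume c: "\<And>x y. (x,y) \<in> r \<Longrightarrow> x \<in> Z \<Longrightarrow> y \<in> Z" and a: "a \<in> Z" and ab: "(a,b) \<in> r\<^sup>+"
  from ab show "b \<in> Z" by (induction rule: trancl_induct) (use a c in blast)+
qed

lemma G1_sround: "sround G1 = {R 0 {2}, R 1 {0}, R 1 {3}, R 3 {0, 4}}"
  unfolding sround_def G1_def by simp

lemma G1_S: "opS G1 = cleanup (sround G1)"
  by (rule opS_1) (simp_all add: G1_sround, simp_all add: G1_def sstable_iff)

definition "U1 = \<Union>{R 0 {2}, R 1 {0}, R 1 {3}, R 3 {0, 4}}"

lemma U1_notreach: "(pt 0, pt 1) \<notin> U1\<^sup>+"
proof
  assume "(pt 0, pt 1) \<in> U1\<^sup>+"
  then have "pt 1 \<in> {pt 0, pt 2}"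
    by (rule closed_reach[rotated 2]) (auto simp: U1_def R_def)
  then show False by simp
qed

lemma G1_S_bound: "\<Union>(opS G1) \<subseteq> U1"
  unfolding G1_S U1_def G1_sround[symmetric] using cleanup_sub by blast

lemma trancl_sub: "A \<subseteq> B\<^sup>+ \<Longrightarrow> A\<^sup>+ \<subseteq> B\<^sup>+"
  by (metis trancl_id trancl_mono trans_trancl subsetI)

lemma ex1_Y: "(pt 0, pt 1) \<notin> pref_rel [S, T] 1 V5 le5 F1"
  "(pt 0, pt 1) \<notin> pref_rel [S, T, S] 1 V5 le5 F1"
  "(pt 0, pt 1) \<notin> pref_rel [S, T, S, T] 1 V5 le5 F1"
proof -
  have b1: "\<Union>(opT (opS G1)) \<subseteq> U1\<^sup>+"
    using Union_opT[of "opS G1"] G1_S_bound trancl_mono by blast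
  have b2: "\<Union>(opS (opT (opS G1))) \<subseteq> U1\<^sup>+" using b1 Union_opS by blast
  have b3: "\<Union>(opT (opS (opT (opS G1)))) \<subseteq> U1\<^sup>+"
    using Union_opT[of "opS (opT (opS G1))"] trancl_sub[OF b2] by blast
  show "(pt 0, pt 1) \<notin> pref_rel [S, T] 1 V5 le5 F1"
    "(pt 0, pt 1) \<notin> pref_rel [S, T, S] 1 V5 le5 F1"
    "(pt 0, pt 1) \<notin> pref_rel [S, T, S, T] 1 V5 le5 F1"
    unfolding pref_rel_def apply_word_def induced_def sem1
    using b1 b2 b3 U1_notreach by auto
qed

definition "K1 = {R 0 {1,2}, R 0 {3}, R 0 {0,4}, R 1 {1,2}, R 1 {3}, R 1 {0,4}, R 3 {1,2}, R 3 {3}, R 3 {0,4}}"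

lemma K1_chains: "K1 \<subseteq> chains G1"
proof -
  have A: "R 0 {1,2} \<in> chains G1" "R 1 {0} \<in> chains G1" "R 1 {3} \<in> chains G1" "R 3 {0,4} \<in> chains G1"
    by (auto simp: G1_def intro: chains.base)
  have B: "R 0 {3} \<in> chains G1" by (rule ch_eq[OF _ A(3), of "R 0 {1,2}"]) (auto simp: G1_def)
  have C: "R 1 {0,4} \<in> chains G1" by (rule ch_eq[OF _ A(4), of "R 1 {3}"]) (auto simp: G1_def)
  have D: "R 0 {0,4} \<in> chains G1" by (rule ch_eq[OF _ C, of "R 0 {1,2}"]) (auto simp: G1_def)
  have E: "R 1 {1,2} \<in> chains G1" by (rule ch_eq[OF _ A(1), of "R 1 {0}"]) (auto simp: G1_def)
  have F: "R 3 {1,2} \<in> chains G1" by (rule ch_eq[OF _ A(1), of "R 3 {0,4}"]) (auto simp: G1_def)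
  have H: "R 3 {3} \<in> chains G1" by (rule ch_eq[OF _ B, of "R 3 {0,4}"]) (auto simp: G1_def)
  show ?thesis unfolding K1_def using A B C D E F H by auto
qed


lemma G1_T: "opT G1 = K1"
  unfolding opT_def
proof (rule cleanup_eq2[OF K1_chains chains_RR[of G1 "[0,1,3]" "[{1,2},{0},{3},{0,4}]"] order_refl])
  show "G1 \<subseteq> RR [0, 1, 3] [{1, 2}, {0}, {3}, {0, 4}]" by (simp add: G1_def RR_def)
  show "\<forall>P\<in>K1. \<forall>Q\<in>RR [0, 1, 3] [{1, 2}, {0}, {3}, {0, 4}]. \<not> P \<subset> Q"
    by (simp add: K1_def RR_def psubset_eq)
  show "RR [0, 1, 3] [{1, 2}, {0}, {3}, {0, 4}] \<subseteq> K1 \<union> {{}, R 0 {0}, R 1 {0}, R 3 {0}}"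
    by (simp add: K1_def RR_def)
  show "\<forall>P\<in>{{}, R 0 {0}, R 1 {0}, R 3 {0}}. \<exists>Q\<in>K1. P \<subset> Q"
    by (simp add: K1_def psubset_eq)
qed

lemma K1_sround: "sround K1 = {R 3 {2}, R 3 {4}, R 0 {1,2}, R 0 {3}, R 0 {0,4}, R 1 {1,2}, R 1 {3}, R 1 {0,4}, R 3 {3}}"
  unfolding sround_def K1_def by simp

lemma K1_S: "opS K1 = cleanup (sround K1)"
  by (rule opS_1) (simp_all add: K1_sround, simp_all add: K1_def sstable_iff)

lemma ex1_X: "(pt 0, pt 1) \<in> pref_rel [T, S] 1 V5 le5 F1"
  "(pt 0, pt 1) \<in> pref_rel [T, S, T] 1 V5 le5 F1"
proof -
  have f: "finite (sround K1)" by (simp add: K1_sround)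
  have m: "(pt 0, pt 1) \<in> \<Union>(opS K1)"
    unfolding K1_S Union_cleanup[OF f] by (simp add: K1_sround)
  have "chains (opS K1) \<subseteq> RR [0,1,3] [{1,2},{3},{0,4},{2},{4}]"
  proof (rule chains_RR)
    have "sround K1 \<subseteq> RR [0,1,3] [{1,2},{3},{0,4},{2},{4}]" by (simp add: K1_sround RR_def)
    then show "opS K1 \<subseteq> RR [0,1,3] [{1,2},{3},{0,4},{2},{4}]" unfolding K1_S using cleanup_sub by blast
  qed
  then have "finite (chains (opS K1))" using finite_RR finite_subset by blast
  then have m2: "(pt 0, pt 1) \<in> \<Union>(opT (opS K1))" using Union_opT_ge m by blast
  show "(pt 0, pt 1) \<in> pref_rel [T, S] 1 V5 le5 F1"
    "(pt 0, pt 1) \<in> pref_rel [T, S, T] 1 V5 le5 F1"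
    unfolding pref_rel_def apply_word_def induced_def sem1 using m m2 by (simp_all add: G1_T)
qed


definition "F3 = [stm 0 [1,2], stm 1 [3,4], stm 3 [0], stm 3 [1]]"
definition "G3 = {R 0 {1,2}, R 1 {3,4}, R 3 {0}, R 3 {1}}"

lemma sem3: "sem 1 V5 le5 F3 = G3"
  unfolding sem_def F3_def G3_def by (simp add: stmt_rel_stm[simplified])

lemma wf3: "formula_wf 1 V5 le5 F3"
  unfolding formula_wf_def F3_def by (simp; intro conjI wf_stm[simplified]; simp)

definition "H3 = {R 1 {4}, R 0 {1,2}, R 3 {0}, R 3 {1}}"

lemma G3_sround: "sround G3 = H3"
  unfolding sround_def G3_def H3_def by simp

lemma G3_S: "opS G3 = cleanup H3"
  unfolding G3_sround[symmetric]
  by (rule opS_1) (simp_all add: G3_sround, simp_all add: G3_def H3_def sstable_iff)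

definition "C3 = {{}, R 0 {1,2}, R 0 {4}, R 1 {4}, R 3 {0}, R 3 {1,2}, R 3 {4}, R 3 {1}}"
definition "C3' = {R 0 {1,2}, R 0 {4}, R 1 {4}, R 3 {0}, R 3 {1,2}, R 3 {4}, R 3 {1}}"

lemma C3_closed: "\<forall>P\<in>C3. \<forall>Q\<in>C3. P O Q \<in> C3"
  unfolding C3_def by simp

lemma C3_RR: "C3 \<subseteq> RR [0,1,3] [{1,2},{4},{0},{1}]"
  unfolding C3_def RR_def by simp

lemma C3_stable: "\<forall>P\<in>C3'. \<forall>Q\<in>C3'. \<not> (Q\<inverse> \<subseteq> P \<and> \<not> P \<subseteq> Q\<inverse>)"
  unfolding C3'_def by simp

lemma chains_C3: "G \<subseteq> C3 \<Longrightarrow> chains G \<subseteq> C3"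
  using chains_sub[of G C3] C3_closed by blast

lemma finite_chains_C3: "G \<subseteq> C3 \<Longrightarrow> finite (chains G)"
  using chains_C3 C3_RR finite_RR finite_subset by metis

lemma cleanup_nonempty: "Q \<in> X \<Longrightarrow> Q \<noteq> {} \<Longrightarrow> {} \<notin> cleanup X"
  unfolding cleanup_def by auto

lemma ex3_Y: "(pt 0, pt 1) \<in> pref_rel [S, T] 1 V5 le5 F3"
  "(pt 0, pt 1) \<in> pref_rel [S, T, S] 1 V5 le5 F3"
  "(pt 0, pt 1) \<in> pref_rel [S, T, S, T] 1 V5 le5 F3"
proof -
  have H3C: "H3 \<subseteq> C3" unfolding H3_def C3_def by simp
  have s1: "opS G3 \<subseteq> C3" using G3_S cleanup_sub H3C by blast
  have m1: "(pt 0, pt 1) \<in> \<Union>(opS G3)"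
    unfolding G3_S by (subst Union_cleanup) (simp_all add: H3_def)
  have m2: "(pt 0, pt 1) \<in> \<Union>(opT (opS G3))"
    using Union_opT_ge[OF finite_chains_C3[OF s1]] m1 by blast
  have t2: "opT (opS G3) \<subseteq> C3" unfolding opT_def using cleanup_sub chains_C3[OF s1] by blast
  have R0: "R 0 {1,2} \<in> chains (opS G3)"
  proof -
    have "R 0 {1,2} \<in> opS G3" unfolding G3_S cleanup_def H3_def by (simp add: psubset_eq)
    then show ?thesis by (rule chains.base)
  qed
  have t2': "opT (opS G3) \<subseteq> C3'"
    using t2 cleanup_nonempty[OF R0] unfolding opT_def C3_def C3'_def by auto
  have st: "sstable (opT (opS G3))" by (rule sstable_mono[OF t2' C3_stable])
  have fin: "finite (opT (opS G3))" using t2 C3_RR finite_RR finite_subset by metis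
  have m3: "(pt 0, pt 1) \<in> \<Union>(opS (opT (opS G3)))"
    unfolding opS_0[OF st] Union_cleanup[OF fin] by (rule m2)
  have s3: "opS (opT (opS G3)) \<subseteq> C3" unfolding opS_0[OF st] using t2 cleanup_sub by blast
  have m4: "(pt 0, pt 1) \<in> \<Union>(opT (opS (opT (opS G3))))"
    using Union_opT_ge[OF finite_chains_C3[OF s3]] m3 by blast
  show "(pt 0, pt 1) \<in> pref_rel [S, T] 1 V5 le5 F3"
    "(pt 0, pt 1) \<in> pref_rel [S, T, S] 1 V5 le5 F3"
    "(pt 0, pt 1) \<in> pref_rel [S, T, S, T] 1 V5 le5 F3"
    unfolding pref_rel_def apply_word_def induced_def sem3 using m2 m3 m4 by simp_all
qed

definition "K3 = {R 0 {1,2}, R 0 {3,4}, R 0 {0}, R 1 {1,2}, R 1 {3,4}, R 1 {0}, R 3 {1,2}, R 3 {3,4}, R 3 {0}}"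

lemma K3_chains: "K3 \<subseteq> chains G3"
proof -
  have A: "R 0 {1,2} \<in> chains G3" "R 1 {3,4} \<in> chains G3" "R 3 {0} \<in> chains G3" "R 3 {1} \<in> chains G3"
    by (auto simp: G3_def intro: chains.base)
  have B: "R 0 {3,4} \<in> chains G3" by (rule ch_eq[OF _ A(2), of "R 0 {1,2}"]) (auto simp: G3_def)
  have C: "R 1 {0} \<in> chains G3" by (rule ch_eq[OF _ A(3), of "R 1 {3,4}"]) (auto simp: G3_def)
  have D: "R 0 {0} \<in> chains G3" by (rule ch_eq[OF _ C, of "R 0 {1,2}"]) (auto simp: G3_def)
  have E: "R 3 {1,2} \<in> chains G3" by (rule ch_eq[OF _ A(1), of "R 3 {0}"]) (auto simp: G3_def)
  have F: "R 1 {1,2} \<in> chains G3" by (rule ch_eq[OF _ E, of "R 1 {3,4}"]) (auto simp: G3_def)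
  have H: "R 3 {3,4} \<in> chains G3" by (rule ch_eq[OF _ B, of "R 3 {0}"]) (auto simp: G3_def)
  show ?thesis unfolding K3_def using A B C D E F H by auto
qed

lemma G3_T: "opT G3 = K3"
  unfolding opT_def
proof (rule cleanup_eq2[OF K3_chains chains_RR[of G3 "[0,1,3]" "[{1,2},{3,4},{0},{1}]"] order_refl])
  show "G3 \<subseteq> RR [0, 1, 3] [{1, 2}, {3, 4}, {0}, {1}]" by (simp add: G3_def RR_def)
  show "\<forall>P\<in>K3. \<forall>Q\<in>RR [0, 1, 3] [{1, 2}, {3, 4}, {0}, {1}]. \<not> P \<subset> Q"
    by (simp add: K3_def RR_def psubset_eq)
  show "RR [0, 1, 3] [{1, 2}, {3, 4}, {0}, {1}] \<subseteq> K3 \<union> {{}, R 0 {1}, R 1 {1}, R 3 {1}}"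
    by (simp add: K3_def RR_def)
  show "\<forall>P\<in>{{}, R 0 {1}, R 1 {1}, R 3 {1}}. \<exists>Q\<in>K3. P \<subset> Q"
    by (simp add: K3_def psubset_eq)
qed

lemma K3_sround: "sround K3 = {R 0 {2}, R 0 {4}, R 0 {0}, R 1 {1,2}, R 1 {3,4}, R 1 {0}, R 3 {1,2}, R 3 {3,4}, R 3 {0}}"
  unfolding sround_def K3_def by simp

lemma K3_S: "opS K3 = cleanup (sround K3)"
  by (rule opS_1) (simp_all add: K3_sround, simp_all add: K3_def sstable_iff)

definition "U3 = \<Union>{R 0 {2}, R 0 {4}, R 0 {0}, R 1 {1,2}, R 1 {3,4}, R 1 {0}, R 3 {1,2}, R 3 {3,4}, R 3 {0}}"

lemma U3_notreach: "(pt 0, pt 1) \<notin> U3\<^sup>+"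
proof
  assume "(pt 0, pt 1) \<in> U3\<^sup>+"
  then have "pt 1 \<in> {pt 0, pt 2, pt 4}"
    by (rule closed_reach[rotated 2]) (auto simp: U3_def R_def)
  then show False by simp
qed

lemma ex3_X: "(pt 0, pt 1) \<notin> pref_rel [T, S] 1 V5 le5 F3"
  "(pt 0, pt 1) \<notin> pref_rel [T, S, T] 1 V5 le5 F3"
proof -
  have b1: "\<Union>(opS K3) \<subseteq> U3" unfolding K3_S U3_def K3_sround[symmetric] using cleanup_sub by blast
  have b2: "\<Union>(opT (opS K3)) \<subseteq> U3\<^sup>+" using Union_opT[of "opS K3"] b1 trancl_mono by blast
  show "(pt 0, pt 1) \<notin> pref_rel [T, S] 1 V5 le5 F3"
    "(pt 0, pt 1) \<notin> pref_rel [T, S, T] 1 V5 le5 F3"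
    unfolding pref_rel_def apply_word_def induced_def sem3 using b1 b2 U3_notreach
    by (auto simp: G3_T)
qed


theorem mainTheorem10:
  shows "\<forall>X \<in> {[T, S], [T, S, T]}. \<forall>Y \<in> {[S, T], [S, T, S], [S, T, S, T]}.
           \<not> contained X Y \<and> \<not> contained Y X"
proof -
  have n1: "\<not> contained X Y" if "(pt 0, pt 1) \<in> pref_rel X 1 V5 le5 F"
    "(pt 0, pt 1) \<notin> pref_rel Y 1 V5 le5 F" "formula_wf 1 V5 le5 F" for X Y F
    unfolding contained_def using that wf5 by blast
  show ?thesis
    using n1[OF ex1_X(1) ex1_Y(1) wf1] n1[OF ex1_X(1) ex1_Y(2) wf1] n1[OF ex1_X(1) ex1_Y(3) wf1]
      n1[OF ex1_X(2) ex1_Y(1) wf1] n1[OF ex1_X(2) ex1_Y(2) wf1] n1[OF ex1_X(2) ex1_Y(3) wf1]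
      n1[OF ex3_Y(1) ex3_X(1) wf3] n1[OF ex3_Y(2) ex3_X(1) wf3] n1[OF ex3_Y(3) ex3_X(1) wf3]
      n1[OF ex3_Y(1) ex3_X(2) wf3] n1[OF ex3_Y(2) ex3_X(2) wf3] n1[OF ex3_Y(3) ex3_X(2) wf3]
    by simp
qed

end
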